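(* Let $\Sigma=\{a\}$ be a unary alphabet and let $L\subseteq\Sigma^*$ be a nonempty ideal language (i.e. $L=\Sigma^*L\Sigma^*$). Let $\ell$ be the minimum length of a word in $L$. Then $sc(L)=rc(L)=\ell+1$.
   Context: A DFA $\langle Q,\Sigma,\delta\rangle$ has a total transition function $\delta:Q\times\Sigma\to Q$ extended to words; it is synchronizing if some word $w$ satisfies $\delta(q,w)=\delta(q',w)$ for all $q,q'\in Q$, and $Syn(\mathscr{A})$ is the set of all such words. The state complexity $sc(L)$ of a regular language $L$ is the number of states of the minimal (complete) DFA recognizing $L$. The reset complexity $rc(L)$ of an ideal language $L$ is the minimal number of states of a synchronizing DFA $\mathscr{A}$ with $Syn(\mathscr{A})=L$. *)

theory Defs
  imports Main
begin

text \<open>Complete DFAs over an input alphabet Sg. States are drawn from nat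
  (every finite DFA is isomorphic to one with natural-number states).\<close>

definition dfa :: "nat set \<Rightarrow> 'a set \<Rightarrow> (nat \<Rightarrow> 'a \<Rightarrow> nat) \<Rightarrow> bool" where
  "dfa Q Sg delta \<longleftrightarrow> finite Q \<and> Q \<noteq> {} \<and> (\<forall>q\<in>Q. \<forall>x\<in>Sg. delta q x \<in> Q)"

definition delta_star :: "(nat \<Rightarrow> 'a \<Rightarrow> nat) \<Rightarrow> nat \<Rightarrow> 'a list \<Rightarrow> nat" where
  "delta_star delta q w = foldl delta q w"

definition dfa_lang :: "'a set \<Rightarrow> (nat \<Rightarrow> 'a \<Rightarrow> nat) \<Rightarrow> nat \<Rightarrow> nat set \<Rightarrow> 'a list set" where
  "dfa_lang Sg delta q0 F = {w \<in> lists Sg. delta_star delta q0 w \<in> F}"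

definition Syn :: "nat set \<Rightarrow> 'a set \<Rightarrow> (nat \<Rightarrow> 'a \<Rightarrow> nat) \<Rightarrow> 'a list set" where
  "Syn Q Sg delta = {w \<in> lists Sg. \<forall>q\<in>Q. \<forall>q'\<in>Q. delta_star delta q w = delta_star delta q' w}"

definition synchronizing :: "nat set \<Rightarrow> 'a set \<Rightarrow> (nat \<Rightarrow> 'a \<Rightarrow> nat) \<Rightarrow> bool" where
  "synchronizing Q Sg delta \<longleftrightarrow> Syn Q Sg delta \<noteq> {}"

definition sc :: "'a set \<Rightarrow> 'a list set \<Rightarrow> nat" where
  "sc Sg L = (LEAST n. \<exists>Q delta q0 F. dfa Q Sg delta \<and> q0 \<in> Q \<and> F \<subseteq> Q
                     \<and> dfa_lang Sg delta q0 F = L \<and> card Q = n)"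

definition rc :: "'a set \<Rightarrow> 'a list set \<Rightarrow> nat" where
  "rc Sg L = (LEAST n. \<exists>Q delta. dfa Q Sg delta \<and> synchronizing Q Sg delta
                     \<and> Syn Q Sg delta = L \<and> card Q = n)"

definition ideal_lang :: "'a set \<Rightarrow> 'a list set \<Rightarrow> bool" where
  "ideal_lang Sg L \<longleftrightarrow> L \<subseteq> lists Sg \<and>
     L = {u @ w @ v | u w v. u \<in> lists Sg \<and> w \<in> L \<and> v \<in> lists Sg}"

end

theory Submission
  imports Defs
begin

lemma ds_append: "delta_star d q (u @ v) = delta_star d (delta_star d q u) v"
  by (simp add: delta_star_def)

lemma ds_Suc: "delta_star d q (replicate (Suc n) a) = d (delta_star d q (replicate n a)) a"
proof -
  have "replicate (Suc n) a = replicate n a @ [a]" by (simp add: replicate_append_same)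
  thus ?thesis by (simp add: delta_star_def)
qed

lemma lists_rep: "w \<in> lists {a} \<Longrightarrow> w = replicate (length w) a"
  by (metis in_listsD replicate_length_same singletonD)

lemma rep_lists: "replicate n a \<in> lists {a}"
  by auto

lemma ds_min: "q \<le> l \<Longrightarrow> delta_star (\<lambda>q x. min (q+1) l) q (replicate n a) = min (q+n) l"
proof (induction n arbitrary: q)
  case 0 then show ?case by (simp add: delta_star_def)
next
  case (Suc n)
  have "delta_star (\<lambda>q x. min (q+1) l) q (replicate (Suc n) a)
      = delta_star (\<lambda>q x. min (q+1) l) (min (q+1) l) (replicate n a)"
    by (simp add: delta_star_def)
  also have "\<dots> = min (min (q+1) l + n) l" using Suc.IH[of "min (q+1) l"] by simp
  also have "\<dots> = min (q + Suc n) l" by simp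
  finally show ?case .
qed

lemma L_char:
  fixes a :: 'a and L :: "'a list set" and l :: nat
  assumes "L \<noteq> {}"
    and "ideal_lang {a} L"
    and "l = (LEAST n. \<exists>w\<in>L. length w = n)"
  shows "L = {w \<in> lists {a}. l \<le> length w}"
proof -
  from assms(1) obtain w1 where "w1 \<in> L" by auto
  hence "\<exists>w\<in>L. length w = length w1" by auto
  from LeastI[of "\<lambda>n. \<exists>w\<in>L. length w = n", OF this] assms(3)
  obtain w0 where w0: "w0 \<in> L" "length w0 = l" by auto
  have sub: "L \<subseteq> lists {a}" using assms(2) by (simp add: ideal_lang_def)
  show ?thesis
  proof
    show "L \<subseteq> {w \<in> lists {a}. l \<le> length w}"
    proof
      fix w assume "w \<in> L"
      hence "\<exists>w'\<in>L. length w' = length w" by blast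
      hence "l \<le> length w" unfolding assms(3) by (rule Least_le)
      thus "w \<in> {w \<in> lists {a}. l \<le> length w}" using sub \<open>w \<in> L\<close> by auto
    qed
  next
    show "{w \<in> lists {a}. l \<le> length w} \<subseteq> L"
    proof
      fix w assume w: "w \<in> {w \<in> lists {a}. l \<le> length w}"
      have "w0 \<in> lists {a}" using w0(1) sub by blast
      hence w0r: "w0 = replicate l a" using lists_rep[of w0 a] w0(2) by simp
      have "w = replicate (length w) a" using w lists_rep[of w a] by blast
      also have "\<dots> = [] @ w0 @ replicate (length w - l) a"
        using w w0r by (simp add: replicate_add[symmetric])
      finally have eq: "w = [] @ w0 @ replicate (length w - l) a" .
      have "w \<in> {u @ w @ v | u w v. u \<in> lists {a} \<and> w \<in> L \<and> v \<in> lists {a}}"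
        by (rule CollectI, rule exI[of _ "[]"], rule exI[of _ w0], rule exI[of _ "replicate (length w - l) a"])
           (use eq w0(1) rep_lists in simp)
      thus "w \<in> L" using assms(2) unfolding ideal_lang_def by blast
    qed
  qed
qed

theorem proposition1:
  fixes a :: 'a and L :: "'a list set" and l :: nat
  assumes "L \<noteq> {}"
    and "ideal_lang {a} L"
    and "l = (LEAST n. \<exists>w\<in>L. length w = n)"
  shows "sc {a} L = l + 1 \<and> rc {a} L = l + 1"
proof -
  have Lc: "L = {w \<in> lists {a}. l \<le> length w}" using L_char[OF assms] .
  define d where "d = (\<lambda>q (x::'a). min (q+1) l)"
  have dfa0: "dfa {0..l} {a} d" by (auto simp: dfa_def d_def)
  have dsw: "delta_star d q w = min (q + length w) l" if "q \<le> l" "w \<in> lists {a}" for q w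
    using ds_min[OF that(1), of "length w" a] lists_rep[OF that(2)] by (simp add: d_def)
  have sc: "sc {a} L = l + 1"
    unfolding sc_def
  proof (rule Least_equality)
    have "dfa_lang {a} d 0 {l} = L"
    proof -
      have "delta_star d 0 w \<in> {l} \<longleftrightarrow> l \<le> length w" if "w \<in> lists {a}" for w
        using dsw[of 0 w] that by auto
      thus ?thesis unfolding dfa_lang_def Lc by blast
    qed
    thus "\<exists>Q delta q0 F. dfa Q {a} delta \<and> q0 \<in> Q \<and> F \<subseteq> Q \<and> dfa_lang {a} delta q0 F = L \<and> card Q = l + 1"
      using dfa0 by (intro exI[of _ "{0..l}"] exI[of _ d] exI[of _ 0] exI[of _ "{l}"]) auto
  next
    fix n assume "\<exists>Q delta q0 F. dfa Q {a} delta \<and> q0 \<in> Q \<and> F \<subseteq> Q \<and> dfa_lang {a} delta q0 F = L \<and> card Q = n"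
    then obtain Q delta q0 F where D: "dfa Q {a} delta" "q0 \<in> Q" "F \<subseteq> Q" "dfa_lang {a} delta q0 F = L" "card Q = n"
      by blast
    define g where "g i = delta_star delta q0 (replicate i a)" for i
    have gQ: "g i \<in> Q" for i
    proof (induction i)
      case 0 then show ?case using D(2) by (simp add: g_def delta_star_def)
    next
      case (Suc i) then show ?case using D(1) unfolding g_def ds_Suc by (simp add: dfa_def)
    qed
    have gF: "g i \<in> F \<longleftrightarrow> l \<le> i" for i
    proof -
      have "replicate i a \<in> L \<longleftrightarrow> g i \<in> F" using D(4) rep_lists[of i a]
        unfolding dfa_lang_def g_def by blast
      thus ?thesis using Lc by auto
    qed
    have gadd: "g (i + k) = delta_star delta (g i) (replicate k a)" for i k
      by (simp add: g_def replicate_add ds_append)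
    have inj: "inj_on g {0..l}"
    proof (rule inj_onI, rule ccontr)
      fix i j assume ij: "i \<in> {0..l}" "j \<in> {0..l}" "g i = g j" "i \<noteq> j"
      { fix i j assume ij: "i \<le> l" "j \<le> l" "g i = g j" "i < j"
        have "g (i + (l - j)) = g (j + (l - j))" using gadd ij(3) by metis
        hence False using gF[of "i + (l-j)"] gF[of "j + (l-j)"] ij by auto }
      note * = this
      show False using ij *[of i j] *[of j i] by (cases "i < j") auto
    qed
    have "card (g ` {0..l}) \<le> card Q"
      using gQ D(1) by (intro card_mono) (auto simp: dfa_def)
    thus "l + 1 \<le> n" using card_image[OF inj] D(5) by simp
  qed
  have rc: "rc {a} L = l + 1"
    unfolding rc_def
  proof (rule Least_equality)
    have syn: "Syn {0..l} {a} d = L"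
    proof -
      have "(\<forall>q\<in>{0..l}. \<forall>q'\<in>{0..l}. min (q + n) l = min (q' + n) l) \<longleftrightarrow> l \<le> n" for n
      proof
        assume "\<forall>q\<in>{0..l}. \<forall>q'\<in>{0..l}. min (q + n) l = min (q' + n) l"
        from this[rule_format, of 0 l] show "l \<le> n" by auto
      qed auto
      hence "(\<forall>q\<in>{0..l}. \<forall>q'\<in>{0..l}. delta_star d q w = delta_star d q' w) \<longleftrightarrow> l \<le> length w"
        if "w \<in> lists {a}" for w
        using dsw[OF _ that] by (metis (no_types, lifting) atLeastAtMost_iff)
      thus ?thesis unfolding Syn_def Lc by blast
    qed
    have "replicate l a \<in> L" using Lc by auto
    hence "synchronizing {0..l} {a} d" using syn unfolding synchronizing_def by auto
    thus "\<exists>Q delta. dfa Q {a} delta \<and> synchronizing Q {a} delta \<and> Syn Q {a} delta = L \<and> card Q = l + 1"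
      using dfa0 syn by (intro exI[of _ "{0..l}"] exI[of _ d]) auto
  next
    fix n assume "\<exists>Q delta. dfa Q {a} delta \<and> synchronizing Q {a} delta \<and> Syn Q {a} delta = L \<and> card Q = n"
    then obtain Q delta where D: "dfa Q {a} delta" "Syn Q {a} delta = L" "card Q = n" by blast
    have fQ: "finite Q" "Q \<noteq> {}" using D(1) by (auto simp: dfa_def)
    define S where "S i = (\<lambda>q. delta_star delta q (replicate i a)) ` Q" for i
    have SSuc: "S (Suc i) = (\<lambda>q. delta q a) ` S i" for i
      unfolding S_def ds_Suc by (simp add: image_image)
    have S0: "S 0 = Q" by (simp add: S_def delta_star_def)
    have Sdec: "S (Suc i) \<subseteq> S i" for i
    proof (induction i)
      case 0 then show ?case using D(1) by (auto simp: SSuc S0 dfa_def)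
    next
      case (Suc i) then show ?case by (simp add: SSuc[of "Suc i"] SSuc[of i] image_mono)
    qed
    have Ssub: "S i \<subseteq> Q" for i
      by (induction i) (use Sdec S0 in auto)
    have Sfin: "finite (S i)" for i using Ssub fQ(1) finite_subset by blast
    have Sne: "S i \<noteq> {}" for i using fQ(2) by (simp add: S_def)
    have synS: "replicate i a \<in> L \<longleftrightarrow> (\<forall>x\<in>S i. \<forall>y\<in>S i. x = y)" for i
      using D(2) rep_lists[of i a] unfolding Syn_def S_def by auto
    have stuck: "S (i + k) = S i" if "S (Suc i) = S i" for i k
    proof (induction k)
      case 0 then show ?case by simp
    next
      case (Suc k)
      have "S (i + Suc k) = (\<lambda>q. delta q a) ` S (i + k)" using SSuc[of "i+k"] by simp
      also have "\<dots> = (\<lambda>q. delta q a) ` S i" using Suc by simp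
      also have "\<dots> = S i" using SSuc[of i] that by simp
      finally show ?case .
    qed
    have step: "card (S (Suc i)) < card (S i)" if "i < l" for i
    proof -
      have "S (Suc i) \<noteq> S i"
      proof
        assume "S (Suc i) = S i"
        hence "S l = S i" using stuck[of i "l - i"] that by simp
        moreover have "replicate l a \<in> L" using Lc by auto
        ultimately have "replicate i a \<in> L" using synS by metis
        thus False using Lc that by auto
      qed
      thus ?thesis using Sdec[of i] Sfin[of i] by (intro psubset_card_mono) auto
    qed
    have "card (S i) + i \<le> card Q" if "i \<le> l" for i
      using that
    proof (induction i)
      case 0 then show ?case by (simp add: S0)
    next
      case (Suc i) then show ?case using step[of i] by simp
    qed
    moreover have "card (S l) \<ge> 1" using Sne[of l] Sfin[of l]
      by (simp add: Suc_le_eq card_gt_0_iff)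
    ultimately show "l + 1 \<le> n" using D(3) by (metis add_le_mono1 order_trans add.commute order_refl)
  qed
  show ?thesis using sc rc by simp
qed

end
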